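(* Let $n\ge1$, $\mathfrak g=sl(n+1,\mathbb C)$, $a\in\mathbb C$, $m(a)=-\tfrac12(a+n+1)$, and let $\rho_a$ be the representation of $\mathfrak g$ on $\mathcal P=\mathbb C[z_1,\dots,z_n]$ given, for $f\in\mathcal P$, $1\le k\le n$, $1\le i\ne j\le n$, by $\rho_a(H_k)f=m(a)f-z_k\partial_{z_k}f-\sum_{j}z_j\partial_{z_j}f$, $\rho_a(E_{1,k+1})f=-m(a)z_kf+z_k\sum_jz_j\partial_{z_j}f$, $\rho_a(E_{k+1,1})f=-\partial_{z_k}f$, $\rho_a(E_{i+1,j+1})f=-z_j\partial_{z_i}f$. Assume $\mathcal Q\neq(0)$ is a finite-dimensional subspace of $\mathcal P$ invariant under $\rho_a(X)$ for all $X\in\mathfrak g$. Then $m(a)$ is a non-negative integer, $\mathcal Q=\mathcal P_{m(a)}$, and the restriction of $\rho_a$ to $\mathcal Q$ coincides with $d\pi_{m(a)}$.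
   Context: $E_{ij}$ is the $(n+1)\times(n+1)$ matrix with $1$ in entry $(i,j)$ and $0$ elsewhere; $H_k=E_{k+1,k+1}-E_{11}$; the $H_k$ and $E_{ij}$ ($i\ne j$) form a basis of $\mathfrak g$. (Equivalently, $\rho_a(X)=W(i\tilde X+\tfrac12a\varphi_1(X))$ via the Weyl correspondence, but the formulas above determine $\rho_a$.) For an integer $m\ge0$, $\mathcal P_m$ is the space of complex polynomials on $\mathbb C^n$ of degree $\le m$, and $d\pi_m$ is the representation of $\mathfrak g$ on $\mathcal P_m$ given by $d\pi_m(H_k)f=mf-z_k\partial_{z_k}f-\sum_jz_j\partial_{z_j}f$, $d\pi_m(E_{1,k+1})f=-mz_kf+z_k\sum_jz_j\partial_{z_j}f$, $d\pi_m(E_{k+1,1})f=-\partial_{z_k}f$, $d\pi_m(E_{i+1,j+1})f=-z_j\partial_{z_i}f$ (this is the complexified differential of the representation $\pi_m$ of $SU(n+1)$ on $\mathcal P_m$, $(\pi_m(g)f)(z)=(bz^t+a)^mf(g^{-1}\cdot z)$ where $g^{-1}=\begin{pmatrix}a&b\\c&d\end{pmatrix}$ and $g\cdot z=(a+bz^t)^{-1}(c+dz^t)^t$). *)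

theory Defs
  imports Complex_Main
begin

text \<open>Polynomials in z_1..z_n are represented by their coefficient functions on
multi-indices alpha :: nat => nat (alpha k = exponent of z_k), with finite support and
only variables 1..n occurring.\<close>

type_synonym mindex = "nat \<Rightarrow> nat"
type_synonym cpoly = "mindex \<Rightarrow> complex"

definition valid_index :: "nat \<Rightarrow> mindex \<Rightarrow> bool" where
  "valid_index n \<alpha> \<longleftrightarrow> (\<forall>i. i \<notin> {1..n} \<longrightarrow> \<alpha> i = 0)"

definition polys :: "nat \<Rightarrow> cpoly set" where
  "polys n = {f. finite {\<alpha>. f \<alpha> \<noteq> 0} \<and> (\<forall>\<alpha>. f \<alpha> \<noteq> 0 \<longrightarrow> valid_index n \<alpha>)}"

definition total_deg :: "nat \<Rightarrow> mindex \<Rightarrow> nat" where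
  "total_deg n \<alpha> = (\<Sum>i\<in>{1..n}. \<alpha> i)"

definition polys_deg :: "nat \<Rightarrow> nat \<Rightarrow> cpoly set" where
  "polys_deg n m = {f \<in> polys n. \<forall>\<alpha>. f \<alpha> \<noteq> 0 \<longrightarrow> total_deg n \<alpha> \<le> m}"

definition mulz :: "nat \<Rightarrow> cpoly \<Rightarrow> cpoly" where
  "mulz k f = (\<lambda>\<alpha>. if \<alpha> k = 0 then 0 else f (\<alpha>(k := \<alpha> k - 1)))"

definition dz :: "nat \<Rightarrow> cpoly \<Rightarrow> cpoly" where
  "dz k f = (\<lambda>\<alpha>. of_nat (\<alpha> k + 1) * f (\<alpha>(k := \<alpha> k + 1)))"

definition euler :: "nat \<Rightarrow> cpoly \<Rightarrow> cpoly" where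
  "euler n f = (\<lambda>\<alpha>. \<Sum>j\<in>{1..n}. mulz j (dz j f) \<alpha>)"

definition opH :: "nat \<Rightarrow> complex \<Rightarrow> nat \<Rightarrow> cpoly \<Rightarrow> cpoly" where
  "opH n c k f = (\<lambda>\<alpha>. c * f \<alpha> - mulz k (dz k f) \<alpha> - euler n f \<alpha>)"

definition opE1 :: "nat \<Rightarrow> complex \<Rightarrow> nat \<Rightarrow> cpoly \<Rightarrow> cpoly" where
  "opE1 n c k f = (\<lambda>\<alpha>. - c * mulz k f \<alpha> + mulz k (euler n f) \<alpha>)"

definition opE1' :: "nat \<Rightarrow> cpoly \<Rightarrow> cpoly" where
  "opE1' k f = (\<lambda>\<alpha>. - dz k f \<alpha>)"

definition opEij :: "nat \<Rightarrow> nat \<Rightarrow> cpoly \<Rightarrow> cpoly" where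
  "opEij i j f = (\<lambda>\<alpha>. - mulz j (dz i f) \<alpha>)"

text \<open>sl(n+1,C): (n+1)x(n+1) complex matrices, indices 1..n+1, trace zero.\<close>
definition sl :: "nat \<Rightarrow> (nat \<Rightarrow> nat \<Rightarrow> complex) set" where
  "sl n = {X. (\<forall>i j. (i \<notin> {1..n+1} \<or> j \<notin> {1..n+1}) \<longrightarrow> X i j = 0)
              \<and> (\<Sum>i\<in>{1..n+1}. X i i) = 0}"

text \<open>Extension by linearity from the basis H_k, E_ij (i \<noteq> j):
X = sum_k X_(k+1,k+1) H_k + sum_(i\<noteq>j) X_ij E_ij for traceless X.\<close>
definition gen_rep :: "nat \<Rightarrow> complex \<Rightarrow> (nat \<Rightarrow> nat \<Rightarrow> complex) \<Rightarrow> cpoly \<Rightarrow> cpoly" where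
  "gen_rep n c X f = (\<lambda>\<alpha>.
      (\<Sum>k\<in>{1..n}. X (k+1) (k+1) * opH n c k f \<alpha>)
    + (\<Sum>k\<in>{1..n}. X 1 (k+1) * opE1 n c k f \<alpha>)
    + (\<Sum>k\<in>{1..n}. X (k+1) 1 * opE1' k f \<alpha>)
    + (\<Sum>i\<in>{1..n}. \<Sum>j\<in>{1..n}. if i = j then 0 else X (i+1) (j+1) * opEij i j f \<alpha>))"

definition m_of :: "nat \<Rightarrow> complex \<Rightarrow> complex" where
  "m_of n a = - (a + of_nat n + 1) / 2"

definition rho :: "nat \<Rightarrow> complex \<Rightarrow> (nat \<Rightarrow> nat \<Rightarrow> complex) \<Rightarrow> cpoly \<Rightarrow> cpoly" where
  "rho n a = gen_rep n (m_of n a)"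

definition dpi :: "nat \<Rightarrow> nat \<Rightarrow> (nat \<Rightarrow> nat \<Rightarrow> complex) \<Rightarrow> cpoly \<Rightarrow> cpoly" where
  "dpi n m = gen_rep n (of_nat m)"

definition is_subspace :: "nat \<Rightarrow> cpoly set \<Rightarrow> bool" where
  "is_subspace n Q \<longleftrightarrow> Q \<subseteq> polys n \<and> (\<lambda>_. 0) \<in> Q
     \<and> (\<forall>f\<in>Q. \<forall>g\<in>Q. (\<lambda>\<alpha>. f \<alpha> + g \<alpha>) \<in> Q)
     \<and> (\<forall>c::complex. \<forall>f\<in>Q. (\<lambda>\<alpha>. c * f \<alpha>) \<in> Q)"

definition fin_dim :: "cpoly set \<Rightarrow> bool" where
  "fin_dim Q \<longleftrightarrow> (\<exists>B. finite B \<and> B \<subseteq> Q \<and>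
      (\<forall>f\<in>Q. \<exists>c :: cpoly \<Rightarrow> complex. f = (\<lambda>\<alpha>. \<Sum>b\<in>B. c b * b \<alpha>)))"

end

theory Submission
  imports Defs
begin

definition topdeg :: "nat \<Rightarrow> cpoly \<Rightarrow> nat \<Rightarrow> bool" where
  "topdeg n f d \<longleftrightarrow> (\<exists>\<alpha>. f \<alpha> \<noteq> 0 \<and> total_deg n \<alpha> = d) \<and> (\<forall>\<beta>. f \<beta> \<noteq> 0 \<longrightarrow> total_deg n \<beta> \<le> d)"

definition mono :: "mindex \<Rightarrow> cpoly" where
  "mono \<beta> = (\<lambda>\<alpha>. if \<alpha> = \<beta> then 1 else 0)"

lemma total_deg_inc:
  assumes "k \<in> {1..n}"
  shows "total_deg n (\<alpha>(k := \<alpha> k + 1)) = total_deg n \<alpha> + 1"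
proof -
  have "(\<Sum>i\<in>{1..n}. (\<alpha>(k := \<alpha> k + 1)) i) = (\<Sum>i\<in>{1..n}. \<alpha> i + (if i = k then 1 else 0))"
    by (rule sum.cong) auto
  also have "\<dots> = (\<Sum>i\<in>{1..n}. \<alpha> i) + 1"
    using assms by (simp add: sum.distrib)
  finally show ?thesis by (simp add: total_deg_def)
qed

lemma mulz_dz: "mulz j (dz j f) \<alpha> = of_nat (\<alpha> j) * f \<alpha>"
  by (auto simp: mulz_def dz_def)

lemma euler_eq: "euler n f \<alpha> = of_nat (total_deg n \<alpha>) * f \<alpha>"
  by (simp add: euler_def total_deg_def mulz_dz sum_distrib_right)

lemma mulz_pos: "\<alpha> k \<noteq> 0 \<Longrightarrow> mulz k g \<alpha> = g (\<alpha>(k := \<alpha> k - 1))"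
  by (simp add: mulz_def)

lemma mulz_inc: "mulz k g (\<gamma>(k := \<gamma> k + 1)) = g \<gamma>"
  by (simp add: mulz_def)

lemma mulz_incS: "mulz k g (\<gamma>(k := Suc (\<gamma> k))) = g \<gamma>"
  by (simp add: mulz_def)

lemma if01_mult: "(if P then (1::complex) else 0) * x = (if P then x else 0)" by simp

lemma gen_rep_E1:
  assumes "k \<in> {1..n}"
  shows "gen_rep n c (\<lambda>i j. if i = 1 \<and> j = k+1 then 1 else 0) f = opE1 n c k f"
  using assms by (auto simp: gen_rep_def fun_eq_iff if01_mult sum.delta cong: if_cong)

lemma gen_rep_E1':
  assumes "k \<in> {1..n}"
  shows "gen_rep n c (\<lambda>i j. if i = k+1 \<and> j = 1 then 1 else 0) f = opE1' k f"
  using assms by (auto simp: gen_rep_def fun_eq_iff if01_mult sum.delta cong: if_cong)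

lemma sl_E1:
  assumes "k \<in> {1..n}"
  shows "(\<lambda>i j. if i = 1 \<and> j = k+1 then 1 else 0) \<in> sl n"
  using assms by (auto simp: sl_def intro!: sum.neutral)

lemma sl_E1':
  assumes "k \<in> {1..n}"
  shows "(\<lambda>i j. if i = k+1 \<and> j = 1 then 1 else 0) \<in> sl n"
  using assms by (auto simp: sl_def intro!: sum.neutral)


lemma deg0: "valid_index n \<beta> \<Longrightarrow> total_deg n \<beta> = 0 \<Longrightarrow> \<beta> = (\<lambda>_. 0)"
proof
  fix i assume v: "valid_index n \<beta>" and t: "total_deg n \<beta> = 0"
  then have "\<forall>i\<in>{1..n}. \<beta> i = 0" by (simp add: total_deg_def)
  then show "\<beta> i = 0" using v unfolding valid_index_def by (cases "i \<in> {1..n}") auto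
qed

lemma fin_bound:
  assumes "fin_dim Q" "Q \<subseteq> polys n"
  shows "\<exists>D. \<forall>f\<in>Q. \<forall>\<alpha>. f \<alpha> \<noteq> 0 \<longrightarrow> total_deg n \<alpha> \<le> D"
proof -
  obtain B where B: "finite B" "B \<subseteq> Q" "\<forall>f\<in>Q. \<exists>c :: cpoly \<Rightarrow> complex. f = (\<lambda>\<alpha>. \<Sum>b\<in>B. c b * b \<alpha>)"
    using assms(1) by (auto simp: fin_dim_def)
  define S where "S = (\<Union>b\<in>B. {\<alpha>. b \<alpha> \<noteq> 0})"
  have finS: "finite S" unfolding S_def using B assms(2) by (auto simp: polys_def)
  have "total_deg n \<alpha> \<le> (\<Sum>\<gamma>\<in>S. total_deg n \<gamma>)" if f: "f \<in> Q" "f \<alpha> \<noteq> 0" for f \<alpha>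
  proof -
    obtain cc where "f = (\<lambda>\<alpha>. \<Sum>b\<in>B. cc b * b \<alpha>)" using B f by blast
    then have "(\<Sum>b\<in>B. cc b * b \<alpha>) \<noteq> 0" using f by metis
    then obtain b where "b \<in> B" "b \<alpha> \<noteq> 0" by (metis (no_types, lifting) mult_zero_right sum.neutral)
    then have "\<alpha> \<in> S" by (auto simp: S_def)
    then show ?thesis using finS by (simp add: member_le_sum)
  qed
  then show ?thesis by blast
qed

context
  fixes n :: nat and c :: complex and Q :: "cpoly set"
  assumes n1: "n \<ge> 1" and sub: "is_subspace n Q"
    and inv: "\<forall>X\<in>sl n. \<forall>f\<in>Q. gen_rep n c X f \<in> Q"
begin

lemma Q_polys: "f \<in> Q \<Longrightarrow> f \<in> polys n"
  using sub by (auto simp: is_subspace_def)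

lemma Q_scale: "f \<in> Q \<Longrightarrow> (\<lambda>\<alpha>. d * f \<alpha>) \<in> Q"
  using sub by (auto simp: is_subspace_def)

lemma Q_zero: "(\<lambda>_. 0) \<in> Q"
  using sub by (auto simp: is_subspace_def)

lemma Q_add: "f \<in> Q \<Longrightarrow> g \<in> Q \<Longrightarrow> (\<lambda>\<alpha>. f \<alpha> + g \<alpha>) \<in> Q"
  using sub by (auto simp: is_subspace_def)

lemma Q_sum: "finite A \<Longrightarrow> (\<forall>b\<in>A. h b \<in> Q) \<Longrightarrow> (\<lambda>\<alpha>. \<Sum>b\<in>A. h b \<alpha>) \<in> Q"
proof (induction A rule: finite_induct)
  case empty then show ?case using Q_zero by simp
next
  case (insert x F)
  then show ?case using Q_add[of "h x" "\<lambda>\<alpha>. \<Sum>b\<in>F. h b \<alpha>"] by simp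
qed

lemma Q_E1: "k \<in> {1..n} \<Longrightarrow> f \<in> Q \<Longrightarrow> opE1 n c k f \<in> Q"
  using inv sl_E1[of k n] gen_rep_E1[of k n c f] by metis

lemma Q_dz: "k \<in> {1..n} \<Longrightarrow> f \<in> Q \<Longrightarrow> dz k f \<in> Q"
proof -
  assume k: "k \<in> {1..n}" and f: "f \<in> Q"
  have "opE1' k f \<in> Q" using inv sl_E1'[OF k] gen_rep_E1'[OF k, of c f] f by metis
  from Q_scale[OF this, of "-1"] show ?thesis by (simp add: opE1'_def)
qed

lemma up_step:
  assumes f: "f \<in> Q" and td: "topdeg n f d" and dc: "of_nat d \<noteq> c"
  shows "topdeg n (opE1 n c 1 f) (d+1)"
proof -
  have one: "(1::nat) \<in> {1..n}" using n1 by simp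
  obtain \<alpha> where a: "f \<alpha> \<noteq> 0" "total_deg n \<alpha> = d" using td by (auto simp: topdeg_def)
  have "opE1 n c 1 f (\<alpha>(1 := \<alpha> 1 + 1)) = (of_nat d - c) * f \<alpha>"
    by (simp add: opE1_def mulz_inc mulz_incS euler_eq a algebra_simps)
  moreover have "total_deg n (\<alpha>(1 := \<alpha> 1 + 1)) = d + 1" using total_deg_inc[OF one] a by simp
  ultimately have A: "\<exists>\<alpha>. opE1 n c 1 f \<alpha> \<noteq> 0 \<and> total_deg n \<alpha> = d + 1"
    using a dc by (metis mult_eq_0_iff right_minus_eq)
  have B: "total_deg n \<beta> \<le> d + 1" if b: "opE1 n c 1 f \<beta> \<noteq> 0" for \<beta>
  proof (cases "\<beta> 1 = 0")
    case True
    then have "opE1 n c 1 f \<beta> = 0" by (simp add: opE1_def mulz_def)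
    then show ?thesis using b by simp
  next
    case False
    define \<gamma> where "\<gamma> = \<beta>(1 := \<beta> 1 - 1)"
    have bg: "\<beta> = \<gamma>(1 := \<gamma> 1 + 1)" using False by (auto simp: \<gamma>_def)
    have "opE1 n c 1 f \<beta> = (of_nat (total_deg n \<gamma>) - c) * f \<gamma>"
      unfolding bg by (simp add: opE1_def mulz_inc mulz_incS euler_eq algebra_simps)
    then have "f \<gamma> \<noteq> 0" using b by auto
    then have "total_deg n \<gamma> \<le> d" using td by (auto simp: topdeg_def)
    then show ?thesis using bg total_deg_inc[OF one, of \<gamma>] by simp
  qed
  show ?thesis using A B by (auto simp: topdeg_def)
qed

lemma up_iter:
  assumes "f \<in> Q" "topdeg n f d" "\<forall>i\<ge>d. of_nat i \<noteq> c"
  shows "\<exists>g\<in>Q. topdeg n g (d + j)"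
proof (induction j)
  case 0 then show ?case using assms by auto
next
  case (Suc j)
  then obtain g where "g \<in> Q" "topdeg n g (d + j)" by auto
  moreover have "of_nat (d+j) \<noteq> c" using assms(3)[rule_format, of "d+j"] by simp
  ultimately have "opE1 n c 1 g \<in> Q" "topdeg n (opE1 n c 1 g) (d + j + 1)"
    using up_step Q_E1[of 1] n1 by auto
  then show ?case by auto
qed

lemma down_step:
  assumes f: "f \<in> Q" and td: "topdeg n f (Suc d)"
  shows "\<exists>g\<in>Q. topdeg n g d"
proof -
  obtain \<alpha> where a: "f \<alpha> \<noteq> 0" "total_deg n \<alpha> = Suc d" using td by (auto simp: topdeg_def)
  obtain k where k: "k \<in> {1..n}" "\<alpha> k \<noteq> 0"
  proof (rule ccontr)
    assume "\<not> thesis"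
    then have "\<forall>k\<in>{1..n}. \<alpha> k = 0" using that by blast
    then have "total_deg n \<alpha> = 0" by (simp add: total_deg_def)
    then show False using a by simp
  qed
  define \<gamma> where "\<gamma> = \<alpha>(k := \<alpha> k - 1)"
  have ag: "\<alpha> = \<gamma>(k := \<gamma> k + 1)" using k by (auto simp: \<gamma>_def)
  have "dz k f \<gamma> = of_nat (\<alpha> k) * f \<alpha>" using k by (simp add: dz_def \<gamma>_def)
  then have g1: "dz k f \<gamma> \<noteq> 0" using k a by simp
  have g2: "total_deg n \<gamma> = d" using total_deg_inc[OF k(1), of \<gamma>] ag a by simp
  have B: "total_deg n \<beta> \<le> d" if b: "dz k f \<beta> \<noteq> 0" for \<beta>
  proof -
    have "f (\<beta>(k := \<beta> k + 1)) \<noteq> 0" using b by (simp add: dz_def)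
    then have "total_deg n (\<beta>(k := \<beta> k + 1)) \<le> Suc d" using td by (auto simp: topdeg_def)
    then show ?thesis using total_deg_inc[OF k(1), of \<beta>] by simp
  qed
  have "topdeg n (dz k f) d" using g1 g2 B by (auto simp: topdeg_def)
  then show ?thesis using Q_dz[OF k(1) f] by auto
qed

lemma down_iter: "f \<in> Q \<Longrightarrow> topdeg n f d \<Longrightarrow> \<exists>g\<in>Q. topdeg n g 0"
proof (induction d arbitrary: f)
  case 0 then show ?case by auto
next
  case (Suc d) then show ?case using down_step by blast
qed

lemma has_topdeg:
  assumes "f \<in> Q" "f \<noteq> (\<lambda>_. 0)"
  shows "\<exists>d. topdeg n f d"
proof -
  let ?S = "{\<alpha>. f \<alpha> \<noteq> 0}"
  have fin: "finite ?S" using Q_polys[OF assms(1)] by (simp add: polys_def)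
  have ne: "?S \<noteq> {}" using assms(2) by auto
  define d where "d = Max (total_deg n ` ?S)"
  have "d \<in> total_deg n ` ?S" unfolding d_def using fin ne by simp
  moreover have "\<forall>\<beta>. f \<beta> \<noteq> 0 \<longrightarrow> total_deg n \<beta> \<le> d" unfolding d_def using fin by simp
  ultimately have "topdeg n f d" by (auto simp: topdeg_def)
  then show ?thesis by blast
qed

lemma one_in:
  assumes "f \<in> Q" "f \<noteq> (\<lambda>_. 0)"
  shows "mono (\<lambda>_. 0) \<in> Q"
proof -
  obtain d where "topdeg n f d" using has_topdeg assms by blast
  then obtain g where g: "g \<in> Q" "topdeg n g 0" using down_iter assms by blast
  obtain \<alpha> where a: "g \<alpha> \<noteq> 0" "total_deg n \<alpha> = 0" using g by (auto simp: topdeg_def)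
  have z: "\<beta> = (\<lambda>_. 0)" if "g \<beta> \<noteq> 0" for \<beta>
  proof -
    have v: "valid_index n \<beta>" using Q_polys[OF g(1)] that by (auto simp: polys_def)
    have "total_deg n \<beta> = 0" using g that by (auto simp: topdeg_def)
    then have "\<forall>i\<in>{1..n}. \<beta> i = 0" by (simp add: total_deg_def)
    show ?thesis
    proof
      fix i show "\<beta> i = 0"
        using v \<open>\<forall>i\<in>{1..n}. \<beta> i = 0\<close> unfolding valid_index_def by (cases "i \<in> {1..n}") auto
    qed
  qed
  have a0: "\<alpha> = (\<lambda>_. 0)" using z a by blast
  have "(\<lambda>\<beta>. (1 / g \<alpha>) * g \<beta>) = mono (\<lambda>_. 0)"
  proof
    fix \<beta> show "1 / g \<alpha> * g \<beta> = mono (\<lambda>_. 0) \<beta>"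
      using a z[of \<beta>] a0 by (cases "g \<beta> = 0") (auto simp: mono_def)
  qed
  then show ?thesis using Q_scale[OF g(1)] by metis
qed


lemma mono_in:
  assumes cm: "c = of_nat m" and one: "mono (\<lambda>_. 0) \<in> Q"
  shows "valid_index n \<beta> \<Longrightarrow> total_deg n \<beta> = d \<Longrightarrow> d \<le> m \<Longrightarrow> mono \<beta> \<in> Q"
proof (induction d arbitrary: \<beta>)
  case 0 then show ?case using one deg0 by metis
next
  case (Suc d)
  obtain k where k: "k \<in> {1..n}" "\<beta> k \<noteq> 0"
  proof (rule ccontr)
    assume "\<not> thesis"
    then have "\<forall>k\<in>{1..n}. \<beta> k = 0" using that by blast
    then have "total_deg n \<beta> = 0" by (simp add: total_deg_def)
    then show False using Suc by simp
  qed
  define \<gamma> where "\<gamma> = \<beta>(k := \<beta> k - 1)"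
  have bg: "\<beta> = \<gamma>(k := \<gamma> k + 1)" using k by (auto simp: \<gamma>_def)
  have vg: "valid_index n \<gamma>" using Suc.prems(1) k by (auto simp: valid_index_def \<gamma>_def)
  have tg: "total_deg n \<gamma> = d" using total_deg_inc[OF k(1), of \<gamma>] Suc.prems(2) unfolding bg[symmetric] by simp
  have mg: "mono \<gamma> \<in> Q" using Suc.IH[OF vg tg] Suc.prems by simp
  have eq: "opE1 n c k (mono \<gamma>) = (\<lambda>\<alpha>. (of_nat d - c) * mono \<beta> \<alpha>)"
  proof
    fix \<alpha>
    show "opE1 n c k (mono \<gamma>) \<alpha> = (of_nat d - c) * mono \<beta> \<alpha>"
    proof (cases "\<alpha> k = 0")
      case True
      then have "\<alpha> \<noteq> \<beta>" using k by auto
      then show ?thesis using True by (simp add: opE1_def mulz_def mono_def)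
    next
      case False
      define \<delta> where "\<delta> = \<alpha>(k := \<alpha> k - 1)"
      have ad: "\<alpha> = \<delta>(k := \<delta> k + 1)" using False by (auto simp: \<delta>_def)
      have iff: "(\<delta> = \<gamma>) = (\<alpha> = \<beta>)"
      proof
        assume "\<delta> = \<gamma>" then show "\<alpha> = \<beta>" using ad bg by simp
      next
        assume "\<alpha> = \<beta>" then show "\<delta> = \<gamma>" by (simp add: \<delta>_def \<gamma>_def)
      qed
      have "opE1 n c k (mono \<gamma>) \<alpha> = (of_nat (total_deg n \<delta>) - c) * mono \<gamma> \<delta>"
        unfolding ad by (simp add: opE1_def mulz_inc mulz_incS euler_eq algebra_simps)
      also have "\<dots> = (of_nat d - c) * mono \<beta> \<alpha>"
        using iff tg by (auto simp: mono_def)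
      finally show ?thesis .
    qed
  qed
  have "opE1 n c k (mono \<gamma>) \<in> Q" using Q_E1[OF k(1) mg] .
  then have "(\<lambda>\<alpha>. (1 / (of_nat d - c)) * ((of_nat d - c) * mono \<beta> \<alpha>)) \<in> Q"
    using Q_scale eq by metis
  moreover have "of_nat d - c \<noteq> 0" using cm Suc.prems by simp
  ultimately show ?case by simp
qed

lemma no_escape:
  assumes D: "\<forall>f\<in>Q. \<forall>\<alpha>. f \<alpha> \<noteq> 0 \<longrightarrow> total_deg n \<alpha> \<le> D"
    and g: "g \<in> Q" "topdeg n g d" "\<forall>i\<ge>d. of_nat i \<noteq> c"
  shows False
proof -
  obtain h where "h \<in> Q" "topdeg n h (d + (D+1))" using up_iter[OF g] by blast
  then obtain \<alpha> where "h \<alpha> \<noteq> 0" "total_deg n \<alpha> = d + (D+1)" "h \<in> Q" by (auto simp: topdeg_def)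
  then show False using D by fastforce
qed

end

theorem proposition8p3:
  fixes n :: nat and a :: complex and Q :: "cpoly set"
  assumes "n \<ge> 1"
    and "is_subspace n Q"
    and "fin_dim Q"
    and "Q \<noteq> {\<lambda>_. 0}"
    and "\<forall>X\<in>sl n. \<forall>f\<in>Q. rho n a X f \<in> Q"
  shows "\<exists>m::nat. m_of n a = of_nat m \<and> Q = polys_deg n m
           \<and> (\<forall>X\<in>sl n. \<forall>f\<in>Q. rho n a X f = dpi n m X f)"
proof -
  define c where "c = m_of n a"
  have inv: "\<forall>X\<in>sl n. \<forall>f\<in>Q. gen_rep n c X f \<in> Q" using assms(5) by (simp add: rho_def c_def)
  note ctx = assms(1) assms(2) inv
  have sub: "Q \<subseteq> polys n" using assms(2) by (auto simp: is_subspace_def)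
  obtain D where D: "\<forall>f\<in>Q. \<forall>\<alpha>. f \<alpha> \<noteq> 0 \<longrightarrow> total_deg n \<alpha> \<le> D"
    using fin_bound[OF assms(3) sub] by blast
  obtain f where f: "f \<in> Q" "f \<noteq> (\<lambda>_. 0)"
    using assms(4) Q_zero[OF ctx] by blast
  have one: "mono (\<lambda>_. 0) \<in> Q" using one_in[OF ctx f] .
  have td1: "topdeg n (mono (\<lambda>_. 0)) 0" by (auto simp: topdeg_def mono_def total_deg_def)
  obtain m where cm: "c = of_nat m"
  proof (rule ccontr)
    assume "\<not> thesis"
    then have "\<forall>i\<ge>0. of_nat i \<noteq> c" using that by metis
    then show False using no_escape[OF ctx D one td1] by blast
  qed
  have QP: "Q \<subseteq> polys_deg n m"
  proof
    fix g assume g: "g \<in> Q"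
    have "total_deg n \<alpha> \<le> m" if "g \<alpha> \<noteq> 0" for \<alpha>
    proof (rule ccontr)
      assume "\<not> total_deg n \<alpha> \<le> m"
      have "g \<noteq> (\<lambda>_. 0)" using that by auto
      then obtain d where td: "topdeg n g d" using has_topdeg[OF ctx g] by blast
      then have "total_deg n \<alpha> \<le> d" using that by (auto simp: topdeg_def)
      then have "\<forall>i\<ge>d. of_nat i \<noteq> c" using \<open>\<not> total_deg n \<alpha> \<le> m\<close> cm by auto
      then show False using no_escape[OF ctx D g td] by blast
    qed
    then show "g \<in> polys_deg n m" using g sub by (auto simp: polys_deg_def)
  qed
  have PQ: "polys_deg n m \<subseteq> Q"
  proof
    fix g assume g: "g \<in> polys_deg n m"
    define S where "S = {\<alpha>. g \<alpha> \<noteq> 0}"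
    have finS: "finite S" using g by (auto simp: polys_deg_def polys_def S_def)
    have "\<forall>\<beta>\<in>S. (\<lambda>\<alpha>. g \<beta> * mono \<beta> \<alpha>) \<in> Q"
    proof
      fix \<beta> assume b: "\<beta> \<in> S"
      have "valid_index n \<beta>" "total_deg n \<beta> \<le> m" using g b
        by (auto simp: polys_deg_def polys_def S_def)
      then have "mono \<beta> \<in> Q" using mono_in[OF ctx cm one] by blast
      then show "(\<lambda>\<alpha>. g \<beta> * mono \<beta> \<alpha>) \<in> Q" using Q_scale[OF ctx] by blast
    qed
    then have "(\<lambda>\<alpha>. \<Sum>\<beta>\<in>S. g \<beta> * mono \<beta> \<alpha>) \<in> Q"
      using Q_sum[OF ctx finS, of "\<lambda>\<beta> \<alpha>. g \<beta> * mono \<beta> \<alpha>"] by simp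
    moreover have "(\<lambda>\<alpha>. \<Sum>\<beta>\<in>S. g \<beta> * mono \<beta> \<alpha>) = g"
    proof
      fix \<alpha>
      have "(\<Sum>\<beta>\<in>S. g \<beta> * mono \<beta> \<alpha>) = (\<Sum>\<beta>\<in>S. if \<alpha> = \<beta> then g \<beta> else 0)"
        by (rule sum.cong) (auto simp: mono_def)
      also have "\<dots> = g \<alpha>" using finS by (simp add: sum.delta S_def)
      finally show "(\<Sum>\<beta>\<in>S. g \<beta> * mono \<beta> \<alpha>) = g \<alpha>" .
    qed
    ultimately show "g \<in> Q" by simp
  qed
  have "rho n a = dpi n m" by (simp add: rho_def dpi_def c_def[symmetric] cm)
  then show ?thesis using QP PQ cm c_def by auto
qed

end
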